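(* Let $\mathcal{H}=\mathcal{H}_{\mathcal{Y}}\times\mathcal{H}_{n+1}$ be closed under scaling, let $c\in(0,1)$, let $\ell$ be a loss on $\mathcal{H}_{\mathcal{Y}}\times\mathcal{X}\times\mathcal{Y}$, and let $\Phi\colon\mathbb{R}\to\mathbb{R}$ be a decreasing function with $\lim_{t\to+\infty}\Phi(t)=0$ and $\Phi(t)\ge\mathbb{1}_{t\le0}$ for all $t\in\mathbb{R}$. Let $\mathcal{D}$ be a distribution over $\mathcal{X}\times\mathcal{Y}$, and assume $\hat h=(\hat h_{\mathcal{Y}},\hat h_{n+1})\in\mathcal{H}$ satisfies $\mathcal{E}_{\ell}(\hat h_{\mathcal{Y}})=\inf_{h_{\mathcal{Y}}\in\mathcal{H}_{\mathcal{Y}}}\mathcal{E}_{\ell}(h_{\mathcal{Y}})$ and $\mathcal{E}_{\ell_{\hat h_{\mathcal{Y}}}}(\hat h_{n+1})=\inf_{h=(h_{\mathcal{Y}},h_{n+1})\in\mathcal{H}}\mathcal{E}_{\ell_{h_{\mathcal{Y}}}}(h_{n+1})$. If there exists $h^*=(h^*_{\mathcal{Y}},h^*_{n+1})\in\mathcal{H}$ with $\mathcal{E}_{\mathsf{L}_{\mathrm{abs}}}(h^* )=0$, then $\mathcal{E}_{\mathsf{L}_{\mathrm{abs}}}(\hat h)=0$.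
   Context: Let $\mathcal{X}$ be an input space and $\mathcal{Y}=\{1,\dots,n\}$, $n\ge2$. $\mathcal{H}_{\mathcal{Y}}$ is a set of functions $h_{\mathcal{Y}}\colon\mathcal{X}\times\mathcal{Y}\to\mathbb{R}$ and $\mathcal{H}_{n+1}$ a set of functions $h_{n+1}\colon\mathcal{X}\to\mathbb{R}$; a pair $h=(h_{\mathcal{Y}},h_{n+1})$ is identified with the function on $\mathcal{X}\times(\mathcal{Y}\cup\{n+1\})$ given by $h(x,y)=h_{\mathcal{Y}}(x,y)$ for $y\in\mathcal{Y}$ and $h(x,n+1)=h_{n+1}(x)$. $\mathcal{H}$ is closed under scaling if $\alpha h\in\mathcal{H}$ for all $h\in\mathcal{H}$ and $\alpha\in\mathbb{R}$. $\mathsf{h}_{\mathcal{Y}}(x)=\operatorname{argmax}_{y\in\mathcal{Y}}h_{\mathcal{Y}}(x,y)$ (ties broken by a fixed deterministic rule). The predicted label $\mathsf{h}(x)$ is $n+1$ if $h_{n+1}(x)\ge\max_{y\in\mathcal{Y}}h_{\mathcal{Y}}(x,y)$, and $\mathsf{h}_{\mathcal{Y}}(x)$ otherwise. The abstention loss with constant cost $c$ is $\mathsf{L}_{\mathrm{abs}}(h,x,y)=\mathbb{1}_{\mathsf{h}(x)\neq y}\mathbb{1}_{\mathsf{h}(x)\neq n+1}+c\,\mathbb{1}_{\mathsf{h}(x)=n+1}$. For fixed $h_{\mathcal{Y}}$, the second-stage surrogate is $\ell_{h_{\mathcal{Y}}}(h_{n+1},x,y)=\mathbb{1}_{\mathsf{h}_{\mathcal{Y}}(x)\neq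 y}\,\Phi\big(h_{n+1}(x)-\max_{y'\in\mathcal{Y}}h_{\mathcal{Y}}(x,y')\big)+c\,\Phi\big(\max_{y'\in\mathcal{Y}}h_{\mathcal{Y}}(x,y')-h_{n+1}(x)\big)$. For a loss $\mathsf{L}$, $\mathcal{E}_{\mathsf{L}}(g)=\mathbb{E}_{(x,y)\sim\mathcal{D}}[\mathsf{L}(g,x,y)]$. *)

theory Defs
  imports "HOL-Probability.Probability"
begin

text \<open>Labels are 1..n (type nat); label n+1 means abstention.
  Scores h_Y : 'x => nat => real (only values on {1..n} matter), h_{n+1} : 'x => real.\<close>

definition maxscore :: "nat \<Rightarrow> ('x \<Rightarrow> nat \<Rightarrow> real) \<Rightarrow> 'x \<Rightarrow> real" where
  "maxscore n hY x = Max ((\<lambda>y. hY x y) ` {1..n})"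

definition argmax_label :: "nat \<Rightarrow> ('x \<Rightarrow> nat \<Rightarrow> real) \<Rightarrow> 'x \<Rightarrow> nat" where
  "argmax_label n hY x = (LEAST y. y \<in> {1..n} \<and> hY x y = maxscore n hY x)"

definition pred_label :: "nat \<Rightarrow> ('x \<Rightarrow> nat \<Rightarrow> real) \<Rightarrow> ('x \<Rightarrow> real) \<Rightarrow> 'x \<Rightarrow> nat" where
  "pred_label n hY hn x = (if hn x \<ge> maxscore n hY x then n + 1 else argmax_label n hY x)"

definition abs_loss :: "nat \<Rightarrow> real \<Rightarrow> ('x \<Rightarrow> nat \<Rightarrow> real) \<Rightarrow> ('x \<Rightarrow> real) \<Rightarrow> 'x \<Rightarrow> nat \<Rightarrow> real" where
  "abs_loss n c hY hn x y =
     (if pred_label n hY hn x \<noteq> y \<and> pred_label n hY hn x \<noteq> n + 1 then 1 else 0)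
     + c * (if pred_label n hY hn x = n + 1 then 1 else 0)"

definition second_stage_loss ::
  "nat \<Rightarrow> real \<Rightarrow> (real \<Rightarrow> real) \<Rightarrow> ('x \<Rightarrow> nat \<Rightarrow> real) \<Rightarrow> ('x \<Rightarrow> real) \<Rightarrow> 'x \<Rightarrow> nat \<Rightarrow> real" where
  "second_stage_loss n c \<Phi> hY hn x y =
     (if argmax_label n hY x \<noteq> y then 1 else 0) * \<Phi> (hn x - maxscore n hY x)
     + c * \<Phi> (maxscore n hY x - hn x)"

definition expected_loss :: "('x \<times> nat) measure \<Rightarrow> ('x \<Rightarrow> nat \<Rightarrow> real) \<Rightarrow> ennreal" where
  "expected_loss D L = (\<integral>\<^sup>+ z. ennreal (L (fst z) (snd z)) \<partial>D)"

end

theory Submission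
  imports Defs
begin
lemma lower_int_bound:
  fixes F A K :: "'a \<Rightarrow> ennreal"
  assumes A0: "integral\<^sup>N M A = 0" and K: "K \<in> borel_measurable M" and c: "0 < c"
    and imp: "\<And>z. z \<in> space M \<Longrightarrow> K z < F z \<Longrightarrow> c \<le> A z"
  shows "integral\<^sup>N M F \<le> integral\<^sup>N M K"
proof -
  have "integral\<^sup>S M g \<le> integral\<^sup>N M K" if g: "simple_function M g" "g \<le> F" for g
  proof -
    have gm: "g \<in> borel_measurable M" using g borel_measurable_simple_function by blast
    let ?S = "{z \<in> space M. K z < g z}"
    have S: "?S \<in> sets M" using gm K by measurable
    have "c * emeasure M ?S = (\<integral>\<^sup>+ z. c * indicator ?S z \<partial>M)" using S by (simp add: nn_integral_cmult_indicator)
    also have "... \<le> (\<integral>\<^sup>+ z. A z \<partial>M)" 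
    proof (rule nn_integral_mono)
      fix z assume "z \<in> space M"
      show "c * indicator ?S z \<le> A z"
      proof (cases "z \<in> ?S")
        case True
        then have "K z < F z" using g(2) by (auto simp: le_fun_def intro: order.strict_trans2)
        then show ?thesis using imp True by auto
      qed auto
    qed
    finally have "emeasure M ?S = 0" using A0 c by (metis le_zero_eq mult_eq_0_iff not_less_iff_gr_or_eq)
    then have "AE z in M. g z \<le> K z" using S by (intro AE_I[of _ _ ?S]) auto
    hence "integral\<^sup>N M g \<le> integral\<^sup>N M K" by (rule nn_integral_mono_AE)
    thus ?thesis using nn_integral_eq_simple_integral[OF g(1)] by simp
  qed
  thus ?thesis by (subst nn_integral_def[of M F]) (auto intro!: SUP_least)
qed


lemma argmax_in:
  assumes "n \<ge> 1"
  shows "argmax_label n hY x \<in> {1..n}"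
proof -
  have "maxscore n hY x \<in> (\<lambda>y. hY x y) ` {1..n}"
    unfolding maxscore_def using assms by (intro Max_in) auto
  then obtain y where "y \<in> {1..n}" "hY x y = maxscore n hY x" by auto
  then show ?thesis unfolding argmax_label_def
    by (metis (mono_tags, lifting) LeastI)
qed

lemma maxscore_scale:
  assumes "n \<ge> 1" "(0::real) < a"
  shows "maxscore n (\<lambda>x y. a * hY x y) x = a * maxscore n hY x"
proof -
  have "mono (\<lambda>t. a * t)" using assms by (auto simp: mono_def)
  then have "a * Max ((\<lambda>y. hY x y) ` {1..n}) = Max ((\<lambda>t. a * t) ` ((\<lambda>y. hY x y) ` {1..n}))"
    using assms by (intro mono_Max_commute) auto
  then show ?thesis unfolding maxscore_def by (simp add: image_image)
qed

lemma argmax_scale: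
  assumes "n \<ge> 1" "(0::real) < a"
  shows "argmax_label n (\<lambda>x y. a * hY x y) x = argmax_label n hY x"
  unfolding argmax_label_def maxscore_scale[OF assms] using assms by simp

lemma abs_le_second:
  assumes "n \<ge> 1" "0 \<le> c" and Pge: "\<And>t. \<Phi> t \<ge> (if t \<le> 0 then 1 else 0)"
  shows "abs_loss n c hY hn x y \<le> second_stage_loss n c \<Phi> hY hn x y"
proof -
  have P0: "\<Phi> t \<ge> 0" for t using Pge[of t] by (auto split: if_splits)
  have am: "argmax_label n hY x \<noteq> n + 1" using argmax_in[OF assms(1), of hY x] by auto
  show ?thesis
  proof (cases "hn x \<ge> maxscore n hY x")
    case True
    have "\<Phi> (maxscore n hY x - hn x) \<ge> 1" using Pge[of "maxscore n hY x - hn x"] True by auto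
    then have "c \<le> c * \<Phi> (maxscore n hY x - hn x)" using assms(2) by (simp add: mult_le_cancel_left1)
    moreover have "0 \<le> (if argmax_label n hY x \<noteq> y then 1 else 0) * \<Phi> (hn x - maxscore n hY x)"
      using P0 by simp
    ultimately show ?thesis using True unfolding abs_loss_def second_stage_loss_def pred_label_def by simp
  next
    case False
    have "\<Phi> (hn x - maxscore n hY x) \<ge> 1" using Pge[of "hn x - maxscore n hY x"] False by auto
    moreover have "0 \<le> c * \<Phi> (maxscore n hY x - hn x)" using P0 assms(2) by simp
    ultimately show ?thesis using False am unfolding abs_loss_def second_stage_loss_def pred_label_def by simp
  qed
qed

theorem theorem5:
  fixes n :: nat and c :: real and \<Phi> :: "real \<Rightarrow> real"
    and HY :: "('x \<Rightarrow> nat \<Rightarrow> real) set" and Hn :: "('x \<Rightarrow> real) set"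
    and loss :: "('x \<Rightarrow> nat \<Rightarrow> real) \<Rightarrow> 'x \<Rightarrow> nat \<Rightarrow> real"
    and D :: "('x \<times> nat) measure"
    and hY_hat :: "'x \<Rightarrow> nat \<Rightarrow> real" and hn_hat :: "'x \<Rightarrow> real"
    and hY_star :: "'x \<Rightarrow> nat \<Rightarrow> real" and hn_star :: "'x \<Rightarrow> real"
  assumes n2: "n \<ge> 2"
    and c_pos: "0 < c" and c_lt1: "c < 1"
    and scale_Y: "\<And>hY \<alpha>. hY \<in> HY \<Longrightarrow> (\<lambda>x y. \<alpha> * hY x y) \<in> HY"
    and scale_n: "\<And>hn \<alpha>. hn \<in> Hn \<Longrightarrow> (\<lambda>x. \<alpha> * hn x) \<in> Hn"
    and loss_nonneg: "\<And>h x y. loss h x y \<ge> 0"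
    and Phi_decr: "antimono \<Phi>"
    and Phi_lim: "(\<Phi> \<longlongrightarrow> 0) at_top"
    and Phi_ge: "\<And>t. \<Phi> t \<ge> (if t \<le> 0 then 1 else 0)"
    and D_prob: "prob_space D"
    and D_labels: "AE z in D. snd z \<in> {1..n}"
    and meas_Y: "\<And>hY k. hY \<in> HY \<Longrightarrow> (\<lambda>z. hY (fst z) k) \<in> borel_measurable D"
    and meas_n: "\<And>hn. hn \<in> Hn \<Longrightarrow> (\<lambda>z. hn (fst z)) \<in> borel_measurable D"
    and hat_in: "hY_hat \<in> HY" "hn_hat \<in> Hn"
    and hat_first: "expected_loss D (loss hY_hat) = (INF hY\<in>HY. expected_loss D (loss hY))"
    and hat_second: "expected_loss D (second_stage_loss n c \<Phi> hY_hat hn_hat)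
          = (INF h\<in>HY \<times> Hn. expected_loss D (second_stage_loss n c \<Phi> (fst h) (snd h)))"
    and star_in: "hY_star \<in> HY" "hn_star \<in> Hn"
    and star_zero: "expected_loss D (abs_loss n c hY_star hn_star) = 0"
  shows "expected_loss D (abs_loss n c hY_hat hn_hat) = 0"
proof -
  have n1: "n \<ge> 1" using n2 by simp
  have P0: "\<Phi> t \<ge> 0" for t using Phi_ge[of t] by (auto split: if_splits)
  have Pmeas: "\<Phi> \<in> borel_measurable borel"
  proof -
    have "mono (\<lambda>t. - \<Phi> t)" using Phi_decr by (auto simp: mono_def antimono_def)
    then have "(\<lambda>t. - \<Phi> t) \<in> borel_measurable borel" by (rule borel_measurable_mono)
    then have "(\<lambda>t. - (- \<Phi> t)) \<in> borel_measurable borel" by measurable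
    then show ?thesis by simp
  qed
  define g where "g (z::'x \<times> nat) = maxscore n hY_star (fst z) - hn_star (fst z)" for z
  have gm: "g \<in> borel_measurable D" unfolding g_def maxscore_def
    using meas_Y[OF star_in(1)] meas_n[OF star_in(2)]
    by (intro borel_measurable_diff borel_measurable_Max) auto
  define K where "K i z = (if 0 < g z then ennreal (c * \<Phi> (real (Suc i) * g z)) else 0)" for i z
  have Km: "K i \<in> borel_measurable D" for i
  proof -
    have "(\<lambda>z. \<Phi> (real (Suc i) * g z)) \<in> borel_measurable D"
      using measurable_compose[OF _ Pmeas] gm by measurable
    then show ?thesis unfolding K_def using gm by measurable
  qed
  have Kbound: "K i z \<le> ennreal (c * \<Phi> 0)" for i z
  proof (cases "0 < g z")
    case True
    have "\<Phi> (real (Suc i) * g z) \<le> \<Phi> 0" using Phi_decr True by (auto simp: antimono_def)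
    then show ?thesis unfolding K_def using True c_pos by (auto intro!: ennreal_leI mult_left_mono)
  qed (simp add: K_def)
  have Kfin: "integral\<^sup>N D (K i) < \<infinity>" for i
  proof -
    have "integral\<^sup>N D (K i) \<le> (\<integral>\<^sup>+ z. ennreal (c * \<Phi> 0) \<partial>D)"
      by (intro nn_integral_mono Kbound)
    also have "... = ennreal (c * \<Phi> 0) * emeasure D (space D)" by simp
    also have "... = ennreal (c * \<Phi> 0)" using prob_space.emeasure_space_1[OF D_prob] by simp
    finally show ?thesis by (simp add: order_le_less_trans)
  qed
  have Kdec: "decseq K"
  proof (rule decseq_def[THEN iffD2], intro allI impI le_funI)
    fix i j z assume ij: "(i::nat) \<le> j"
    show "K j z \<le> K i z"
    proof (cases "0 < g z")
      case True
      have "real (Suc i) * g z \<le> real (Suc j) * g z" using ij True by (intro mult_right_mono) auto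
      then have "\<Phi> (real (Suc j) * g z) \<le> \<Phi> (real (Suc i) * g z)" using Phi_decr by (auto simp: antimono_def)
      then show ?thesis unfolding K_def using True c_pos by (auto intro!: ennreal_leI mult_left_mono)
    qed (simp add: K_def)
  qed
  have Kinf: "(INF i. K i z) = 0" for z
  proof (cases "0 < g z")
    case True
    have "filterlim (\<lambda>i. g z * real i) at_top sequentially"
      by (intro filterlim_tendsto_pos_mult_at_top[OF tendsto_const True filterlim_real_sequentially])
    then have "filterlim (\<lambda>i. g z * real (Suc i)) at_top sequentially"
      using filterlim_sequentially_Suc[of "\<lambda>i. g z * real i"] by simp
    then have "filterlim (\<lambda>i. real (Suc i) * g z) at_top sequentially"
      by (simp add: mult.commute)
    then have "((\<lambda>i. \<Phi> (real (Suc i) * g z)) \<longlongrightarrow> 0) sequentially"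
      using Phi_lim by (rule filterlim_compose[rotated])
    then have "((\<lambda>i. ennreal (c * \<Phi> (real (Suc i) * g z))) \<longlongrightarrow> ennreal (c * 0)) sequentially"
      by (intro tendsto_ennrealI tendsto_mult tendsto_const)
    then have lim: "((\<lambda>i. K i z) \<longlongrightarrow> 0) sequentially" using True by (simp add: K_def)
    have "(INF i. K i z) \<le> 0"
      by (intro tendsto_le[OF trivial_limit_sequentially lim tendsto_const] always_eventually allI INF_lower) simp
    then show ?thesis by simp
  qed (simp add: K_def)
  have step: "expected_loss D (second_stage_loss n c \<Phi> (\<lambda>x y. real (Suc i) * hY_star x y) (\<lambda>x. real (Suc i) * hn_star x)) \<le> integral\<^sup>N D (K i)" for i
    unfolding expected_loss_def
  proof (rule lower_int_bound[OF star_zero[unfolded expected_loss_def] Km, of "ennreal c"])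
    show "0 < ennreal c" using c_pos by simp
    have apos: "(0::real) < real (Suc i)" by simp
    fix z assume "z \<in> space D" and lt: "K i z < ennreal (second_stage_loss n c \<Phi> (\<lambda>x y. real (Suc i) * hY_star x y) (\<lambda>x. real (Suc i) * hn_star x) (fst z) (snd z))"
    show "ennreal c \<le> ennreal (abs_loss n c hY_star hn_star (fst z) (snd z))"
    proof (rule ccontr)
      assume "\<not> ennreal c \<le> ennreal (abs_loss n c hY_star hn_star (fst z) (snd z))"
      then have "abs_loss n c hY_star hn_star (fst z) (snd z) < c" by (metis ennreal_leI not_le)
      then have "pred_label n hY_star hn_star (fst z) = snd z" "pred_label n hY_star hn_star (fst z) \<noteq> n + 1"
        using c_lt1 by (auto simp: abs_loss_def split: if_splits)
      then have hlt: "hn_star (fst z) < maxscore n hY_star (fst z)" and am: "argmax_label n hY_star (fst z) = snd z"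
        by (auto simp: pred_label_def split: if_splits)
      then have "0 < g z" by (simp add: g_def)
      then have "K i z = ennreal (second_stage_loss n c \<Phi> (\<lambda>x y. real (Suc i) * hY_star x y) (\<lambda>x. real (Suc i) * hn_star x) (fst z) (snd z))"
        using am unfolding second_stage_loss_def maxscore_scale[OF n1 apos] argmax_scale[OF n1 apos]
        by (simp add: K_def g_def right_diff_distrib)
      with lt show False by simp
    qed
  qed
  have "expected_loss D (abs_loss n c hY_hat hn_hat) \<le> expected_loss D (second_stage_loss n c \<Phi> hY_hat hn_hat)"
    unfolding expected_loss_def using c_pos
    by (intro nn_integral_mono ennreal_leI abs_le_second[OF n1 _ Phi_ge]) simp
  also have "\<dots> \<le> (INF i. integral\<^sup>N D (K i))"
    unfolding hat_second
  proof (rule INF_greatest)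
    fix i
    have "(\<lambda>x y. real (Suc i) * hY_star x y, \<lambda>x. real (Suc i) * hn_star x) \<in> HY \<times> Hn"
      using scale_Y scale_n star_in by auto
    then have "(INF h\<in>HY \<times> Hn. expected_loss D (second_stage_loss n c \<Phi> (fst h) (snd h)))
       \<le> expected_loss D (second_stage_loss n c \<Phi> (\<lambda>x y. real (Suc i) * hY_star x y) (\<lambda>x. real (Suc i) * hn_star x))"
      by (rule INF_lower2) simp
    then show "(INF h\<in>HY \<times> Hn. expected_loss D (second_stage_loss n c \<Phi> (fst h) (snd h))) \<le> integral\<^sup>N D (K i)"
      using step[of i] by (rule order.trans)
  qed
  also have "\<dots> = integral\<^sup>N D (\<lambda>z. INF i. K i z)"
    by (rule nn_integral_monotone_convergence_INF_decseq[symmetric, OF Kdec Km Kfin])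
  also have "\<dots> = 0" by (simp add: Kinf)
  finally show ?thesis by simp
qed

end
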